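(* Let $A\in\mathbb{R}^{n\times n}$, $A\ge0$ entrywise, be the weighted adjacency matrix of a directed stem-bud network with $\rho(A)<1$. If the weights of any of its stem edges are increased by nonnegative amounts (i.e., $A$ is replaced by $A+\sum_{q\in S}w_qe_{q+1}e_q^{\top}$ with $w_q\ge0$ and $S$ a set of stem edges), then the resulting matrix still has spectral radius less than $1$.
   Context: A directed stem-bud network on $n$ nodes has a junction $y\in\{1,\dots,n-1\}$ and weighted adjacency matrix $A=(a_{pq})$ whose only possibly nonzero entries are $a_{q+1,q}$ ($q=1,\dots,n-1$) and $a_{yn}$; $a_{pq}$ is the weight of edge $q\to p$. The stem consists of the edges $q\to q+1$ for $q=1,\dots,y-1$; the bud is the cycle $y\to\cdots\to n\to y$. For a directed line network ($a_{yn}=0$) all edges belong to the stem. $\rho$ is the spectral radius. *)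

theory Defs
  imports "Jordan_Normal_Form.Spectral_Radius"
begin

text \<open>Nodes are numbered 1..n as in the paper; the matrix entry a_pq (weight of the
edge q -> p) is stored at the 0-based position (p-1, q-1).\<close>

definition entry :: "real mat \<Rightarrow> nat \<Rightarrow> nat \<Rightarrow> real" where
  "entry A p q = A $$ (p - 1, q - 1)"

definition stem_bud_network :: "nat \<Rightarrow> nat \<Rightarrow> real mat \<Rightarrow> bool" where
  "stem_bud_network n y A \<longleftrightarrow> A \<in> carrier_mat n n \<and> 1 \<le> y \<and> y \<le> n - 1 \<and>
     (\<forall>p q. 1 \<le> p \<and> p \<le> n \<and> 1 \<le> q \<and> q \<le> n \<and> entry A p q \<noteq> 0 \<longrightarrow>
        (p = q + 1 \<or> (p = y \<and> q = n)))"

definition nonneg_mat :: "real mat \<Rightarrow> bool" where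
  "nonneg_mat A \<longleftrightarrow> (\<forall>i < dim_row A. \<forall>j < dim_col A. A $$ (i, j) \<ge> 0)"

text \<open>Stem edges, indexed by q (edge q -> q+1): q = 1..y-1 in general; for a directed
line network (a_{yn} = 0) all edges q = 1..n-1 belong to the stem.\<close>
definition stem_edges :: "nat \<Rightarrow> nat \<Rightarrow> real mat \<Rightarrow> nat set" where
  "stem_edges n y A = (if entry A y n = 0 then {1..<n} else {1..<y})"

definition edge_increment :: "nat \<Rightarrow> nat set \<Rightarrow> (nat \<Rightarrow> real) \<Rightarrow> real mat" where
  "edge_increment n S w = mat n n (\<lambda>(i, j). if i = j + 1 \<and> j + 1 \<in> S then w (j + 1) else 0)"

definition rho :: "real mat \<Rightarrow> real" where
  "rho A = spectral_radius (map_mat complex_of_real A)"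

end

theory Submission
  imports Defs
begin

definition shape :: "nat \<Rightarrow> nat \<Rightarrow> complex mat \<Rightarrow> bool" where
  "shape n k B \<longleftrightarrow> B \<in> carrier_mat n n \<and> k + 1 < n \<and>
     (\<forall>i<n. \<forall>j<n. B $$ (i,j) \<noteq> 0 \<longrightarrow> i = j + 1 \<or> (i = k \<and> j = n - 1))"

definition cyc :: "nat \<Rightarrow> nat \<Rightarrow> 'a::comm_ring_1 mat \<Rightarrow> 'a" where
  "cyc n k B = B $$ (k, n - 1) * (\<Prod>j\<in>{k..<n-1}. B $$ (j+1, j))"

lemma shape_mult:
  assumes "shape n k B" "dim_vec v = n" "i < n"
  shows "(B *\<^sub>v v) $ i = (if 0 < i then B $$ (i, i-1) * v $ (i-1) else 0)
     + (if i = k then B $$ (k, n-1) * v $ (n-1) else 0)"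
proof -
  have B: "B \<in> carrier_mat n n" and sh: "\<forall>i<n. \<forall>j<n. B $$ (i,j) \<noteq> 0 \<longrightarrow> i = j + 1 \<or> (i = k \<and> j = n - 1)"
    using assms(1) unfolding shape_def by auto
  have "(B *\<^sub>v v) $ i = (\<Sum>j\<in>{0..<n}. B $$ (i,j) * v $ j)"
    using B assms(2,3) by (simp add: scalar_prod_def row_def)
  also have "\<dots> = (\<Sum>j\<in>{0..<n}. (if j + 1 = i then B $$ (i,j) * v $ j else 0)
       + (if i = k \<and> j = n - 1 then B $$ (i,j) * v $ j else 0))"
  proof (rule sum.cong[OF refl])
    fix j assume j: "j \<in> {0..<n}"
    show "B $$ (i,j) * v $ j = (if j + 1 = i then B $$ (i,j) * v $ j else 0)
       + (if i = k \<and> j = n - 1 then B $$ (i,j) * v $ j else 0)"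
      using sh[rule_format, of i j] j assms(3) by auto
  qed
  also have "\<dots> = (if 0 < i then B $$ (i, i-1) * v $ (i-1) else 0)
     + (if i = k then B $$ (k, n-1) * v $ (n-1) else 0)"
  proof -
    have 1: "(\<Sum>j\<in>{0..<n}. (if j + 1 = i then B $$ (i,j) * v $ j else 0))
       = (if 0 < i then B $$ (i, i-1) * v $ (i-1) else 0)"
    proof (cases "0 < i")
      case True
      have "(\<Sum>j\<in>{0..<n}. (if j + 1 = i then B $$ (i,j) * v $ j else 0))
         = (\<Sum>j\<in>{0..<n}. (if j = i - 1 then B $$ (i,j) * v $ j else 0))"
        by (rule sum.cong) (use True in auto)
      also have "\<dots> = B $$ (i, i-1) * v $ (i-1)" using True assms(3) by (simp add: sum.delta)
      finally show ?thesis using True by simp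
    qed auto
    have 2: "(\<Sum>j\<in>{0..<n}. (if i = k \<and> j = n - 1 then B $$ (i,j) * v $ j else 0))
      = (if i = k then B $$ (k, n-1) * v $ (n-1) else 0)"
      using assms(3) by (cases "i = k") (auto simp: sum.delta)
    show ?thesis unfolding sum.distrib 1 2 ..
  qed
  finally show ?thesis .
qed


lemma shape_upper:
  assumes sh: "shape n k B" and ev: "eigenvector B v \<mu>" and mu: "\<mu> \<noteq> 0"
  shows "\<mu> ^ (n - k) = cyc n k B"
proof -
  have B: "B \<in> carrier_mat n n" and kn: "k + 1 < n" using sh unfolding shape_def by auto
  have v: "dim_vec v = n" and v0: "v \<noteq> 0\<^sub>v n" and eq: "B *\<^sub>v v = \<mu> \<cdot>\<^sub>v v"
    using ev B unfolding eigenvector_def by auto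
  have E: "\<mu> * v $ i = (if 0 < i then B $$ (i, i-1) * v $ (i-1) else 0)
     + (if i = k then B $$ (k, n-1) * v $ (n-1) else 0)" if "i < n" for i
  proof -
    have "(B *\<^sub>v v) $ i = \<mu> * v $ i" using eq that v by simp
    with shape_mult[OF sh v that] show ?thesis by simp
  qed
  have low: "v $ i = 0" if "i < k" for i
    using that
  proof (induction i)
    case 0
    then show ?case using E[of 0] kn mu by simp
  next
    case (Suc i)
    then show ?case using E[of "Suc i"] kn mu by simp
  qed
  have high: "v $ (k + d) * \<mu> ^ d = (\<Prod>j\<in>{k..<k+d}. B $$ (j+1, j)) * v $ k" if "k + d < n" for d
    using that
  proof (induction d)
    case 0
    then show ?case by simp
  next
    case (Suc d)
    have "\<mu> * v $ (k + Suc d) = B $$ (k + Suc d, k + d) * v $ (k + d)"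
      using E[of "k + Suc d"] Suc.prems by simp
    then have "v $ (k + Suc d) * \<mu> ^ Suc d = B $$ (k + Suc d, k + d) * (v $ (k + d) * \<mu> ^ d)"
      by (simp add: algebra_simps)
    also have "\<dots> = B $$ (k + Suc d, k + d) * ((\<Prod>j\<in>{k..<k+d}. B $$ (j+1, j)) * v $ k)"
      using Suc by simp
    also have "\<dots> = (\<Prod>j\<in>{k..<k + Suc d}. B $$ (j+1, j)) * v $ k"
      by (simp add: prod.atLeastLessThan_Suc algebra_simps)
    finally show ?case .
  qed
  have vk: "v $ k \<noteq> 0"
  proof
    assume vk0: "v $ k = 0"
    have "v = 0\<^sub>v n"
    proof (rule eq_vecI)
      fix i assume i: "i < dim_vec (0\<^sub>v n)"
      show "v $ i = 0\<^sub>v n $ i"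
      proof (cases "i < k")
        case True then show ?thesis using low i by simp
      next
        case False
        then obtain d where d: "i = k + d" by (metis le_add_diff_inverse not_less)
        from high[of d] d i vk0 mu show ?thesis by simp
      qed
    qed (simp add: v)
    with v0 show False by simp
  qed
  have "\<mu> * v $ k = B $$ (k, n-1) * v $ (n-1)"
    using E[of k] kn low[of "k-1"] by (cases "0 < k") auto
  then have "\<mu> * v $ k * \<mu> ^ (n - 1 - k) = B $$ (k, n-1) * (v $ (k + (n - 1 - k)) * \<mu> ^ (n - 1 - k))"
    using kn by simp
  also have "\<dots> = B $$ (k, n-1) * ((\<Prod>j\<in>{k..<n-1}. B $$ (j+1, j)) * v $ k)"
    using high[of "n - 1 - k"] kn by simp
  finally have "\<mu> ^ (n - k) * v $ k = cyc n k B * v $ k"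
    unfolding cyc_def using kn
    by (simp add: algebra_simps Suc_diff_Suc flip: power_Suc)
  with vk show ?thesis by simp
qed


lemma shape_lower:
  assumes sh: "shape n k B" and mu: "\<mu> \<noteq> 0" and c: "\<mu> ^ (n - k) = cyc n k B"
  shows "eigenvalue B \<mu>"
proof -
  have B: "B \<in> carrier_mat n n" and kn: "k + 1 < n" using sh unfolding shape_def by auto
  define v where "v = vec n (\<lambda>i. if i < k then 0 else (\<Prod>j\<in>{k..<i}. B $$ (j+1, j)) / \<mu> ^ (i - k))"
  have v: "dim_vec v = n" unfolding v_def by simp
  have vi: "v $ i = (if i < k then 0 else (\<Prod>j\<in>{k..<i}. B $$ (j+1, j)) / \<mu> ^ (i - k))" if "i < n" for i
    unfolding v_def using that by (simp only: index_vec)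
  have vk: "v $ k = 1" using vi[of k] kn by simp
  have "B *\<^sub>v v = \<mu> \<cdot>\<^sub>v v"
  proof (rule eq_vecI)
    fix i assume "i < dim_vec (\<mu> \<cdot>\<^sub>v v)"
    then have i: "i < n" using v by simp
    have L: "(B *\<^sub>v v) $ i = (if 0 < i then B $$ (i, i-1) * v $ (i-1) else 0)
     + (if i = k then B $$ (k, n-1) * v $ (n-1) else 0)" by (rule shape_mult[OF sh v i])
    have R: "(\<mu> \<cdot>\<^sub>v v) $ i = \<mu> * v $ i" using i v by simp
    show "(B *\<^sub>v v) $ i = (\<mu> \<cdot>\<^sub>v v) $ i"
    proof (cases "i < k")
      case True
      have "0 < i \<Longrightarrow> v $ (i-1) = 0" using vi[of "i-1"] True i by simp
      then show ?thesis unfolding L R using True vi[of i] i by simp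
    next
      case False
      show ?thesis
      proof (cases "i = k")
        case True
        have "v $ (n-1) = (\<Prod>j\<in>{k..<n-1}. B $$ (j+1, j)) / \<mu> ^ (n - 1 - k)"
          using vi[of "n-1"] kn by simp
        then have "B $$ (k, n-1) * v $ (n-1) = cyc n k B / \<mu> ^ (n - 1 - k)"
          unfolding cyc_def by simp
        also have "\<dots> = \<mu> ^ (n - k) / \<mu> ^ (n - 1 - k)" using c by simp
        also have "\<dots> = \<mu>"
        proof -
          have "n - k = Suc (n - 1 - k)" using kn by simp
          then show ?thesis using mu by simp
        qed
        finally have *: "B $$ (k, n-1) * v $ (n-1) = \<mu>" .
        have "0 < i \<Longrightarrow> v $ (i-1) = 0" using vi[of "i-1"] True i by simp
        then have "(if 0 < i then B $$ (i, i-1) * v $ (i-1) else 0) = 0" by simp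
        then show ?thesis unfolding L R using True * vk by simp
      next
        case False2: False
        with False have ki: "k < i" by simp
        then obtain d where d: "i = Suc (k + d)" by (metis less_imp_Suc_add)
        define p where "p = (\<Prod>j\<in>{k..<k+d}. B $$ (j+1, j))"
        define b where "b = B $$ (i, k + d)"
        have vi1: "v $ i = p * b / \<mu> ^ Suc d"
          using vi[of i] i d unfolding p_def b_def by (simp add: prod.atLeastLessThan_Suc)
        have vi0: "v $ (i - 1) = p / \<mu> ^ d"
          using vi[of "i-1"] i d unfolding p_def by simp
        have "(B *\<^sub>v v) $ i = b * (p / \<mu> ^ d)"
          unfolding L vi0[symmetric] using ki False2 d unfolding b_def by simp
        also have "\<dots> = \<mu> * (p * b / \<mu> ^ Suc d)" using mu by (simp add: field_simps)
        finally show ?thesis unfolding R vi1 .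
      qed
    qed
  qed (use B v in simp)
  moreover have "v \<noteq> 0\<^sub>v n"
  proof
    assume "v = 0\<^sub>v n"
    then have "v $ k = 0" using kn by simp
    with vk show False by simp
  qed
  moreover have "v \<in> carrier_vec n" using v by (rule carrier_vecI)
  moreover have "dim_row B = n" using B by (rule carrier_matD)
  ultimately have "eigenvector B v \<mu>" unfolding eigenvector_def by blast
  then show ?thesis unfolding eigenvalue_def by blast
qed


lemma shape_of_real:
  assumes "M \<in> carrier_mat n n" "k + 1 < n"
    "\<And>i j. i < n \<Longrightarrow> j < n \<Longrightarrow> M $$ (i,j) \<noteq> 0 \<Longrightarrow> i = j + 1 \<or> (i = k \<and> j = n - 1)"
  shows "shape n k (map_mat complex_of_real M)"
  using assms unfolding shape_def by auto

lemma cyc_of_real: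
  assumes "M \<in> carrier_mat n n" "k + 1 < n"
  shows "cyc n k (map_mat complex_of_real M) = complex_of_real (cyc n k M)"
proof -
  have "(\<Prod>j\<in>{k..<n-1}. (map_mat complex_of_real M) $$ (j+1, j)) = (\<Prod>j\<in>{k..<n-1}. complex_of_real (M $$ (j+1, j)))"
    by (rule prod.cong) (use assms in auto)
  then show ?thesis using assms unfolding cyc_def by (simp add: of_real_prod)
qed

lemma rho_bound:
  assumes sh: "shape n k C" and sh': "shape n k C'" and eqc: "cyc n k C' = cyc n k C"
    and P: "cyc n k C = complex_of_real P" "P \<ge> 0"
    and r: "spectral_radius C < 1"
  shows "spectral_radius C' < 1"
proof -
  have C': "C' \<in> carrier_mat n n" and kn: "k + 1 < n" and C: "C \<in> carrier_mat n n"
    using sh sh' unfolding shape_def by auto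
  obtain \<mu> where mu: "\<mu> \<in> spectrum C'" and rr: "spectral_radius C' = norm \<mu>"
    using spectral_radius_mem_max(1)[OF C'] kn by force
  show ?thesis
  proof (cases "\<mu> = 0")
    case True then show ?thesis using rr by simp
  next
    case False
    from mu obtain v where "eigenvector C' v \<mu>" unfolding spectrum_def eigenvalue_def by auto
    from shape_upper[OF sh' this False] eqc P
    have mP: "\<mu> ^ (n - k) = complex_of_real P" by simp
    have L: "0 < n - k" using kn by simp
    have nm: "norm \<mu> ^ (n - k) = P" using mP P(2) by (metis norm_of_real norm_power abs_of_nonneg)
    define l where "l = root (n - k) P"
    have lP: "l ^ (n - k) = P" using L P(2) unfolding l_def by (simp add: real_root_pow_pos2)
    have lpos: "l > 0" unfolding l_def using nm L False
      by (metis P(2) le_less nm norm_eq_zero power_eq_0_iff real_root_gt_zero)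
    have "eigenvalue C (complex_of_real l)"
      by (rule shape_lower[OF sh]) (use lpos lP P in \<open>auto simp flip: of_real_power\<close>)
    then have "norm (complex_of_real l) \<le> spectral_radius C"
      using spectral_radius_mem_max(2)[OF C] kn unfolding spectrum_def by force
    then have "l < 1" using r lpos by simp
    have "norm \<mu> = l" using nm lP lpos L
      by (metis norm_ge_zero power_eq_imp_eq_base less_imp_le)
    then show ?thesis using rr \<open>l < 1\<close> by simp
  qed
qed


theorem corollary5p5:
  fixes n y :: nat and A :: "real mat" and S :: "nat set" and w :: "nat \<Rightarrow> real"
  assumes "stem_bud_network n y A"
    and "nonneg_mat A"
    and "rho A < 1"
    and "S \<subseteq> stem_edges n y A"
    and "\<forall>q \<in> S. w q \<ge> 0"
  shows "rho (A + edge_increment n S w) < 1"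
proof -
  define k where "k = y - 1"
  define E where "E = edge_increment n S w"
  have A: "A \<in> carrier_mat n n" and y1: "1 \<le> y" and yn: "y \<le> n - 1"
    and ent: "\<And>p q. 1 \<le> p \<Longrightarrow> p \<le> n \<Longrightarrow> 1 \<le> q \<Longrightarrow> q \<le> n \<Longrightarrow> entry A p q \<noteq> 0 \<Longrightarrow>
        p = q + 1 \<or> (p = y \<and> q = n)"
    using assms(1) unfolding stem_bud_network_def by blast+
  have kn: "k + 1 < n" using y1 yn unfolding k_def by linarith
  have ky: "k + 1 = y" using y1 unfolding k_def by simp
  have E: "E \<in> carrier_mat n n" unfolding E_def edge_increment_def by simp
  have Eij: "E $$ (i,j) = (if i = j + 1 \<and> j + 1 \<in> S then w (j + 1) else 0)" if "i < n" "j < n" for i j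
    using that unfolding E_def edge_increment_def by simp
  have shA: "A $$ (i,j) \<noteq> 0 \<Longrightarrow> i = j + 1 \<or> (i = k \<and> j = n - 1)" if "i < n" "j < n" for i j
  proof -
    assume "A $$ (i,j) \<noteq> 0"
    then have "entry A (i+1) (j+1) \<noteq> 0" unfolding entry_def by simp
    from ent[OF _ _ _ _ this] that show ?thesis using ky by auto
  qed
  have A'ij: "(A + E) $$ (i,j) = A $$ (i,j) + E $$ (i,j)" if "i < n" "j < n" for i j
    using that A E by simp
  have A': "A + E \<in> carrier_mat n n" using A E by simp
  have sh1: "shape n k (map_mat complex_of_real A)"
    by (rule shape_of_real[OF A kn shA])
  have sh2: "shape n k (map_mat complex_of_real (A + E))"
  proof (rule shape_of_real[OF A' kn])
    fix i j assume ij: "i < n" "j < n" "(A + E) $$ (i, j) \<noteq> 0"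
    then have "A $$ (i,j) \<noteq> 0 \<or> E $$ (i,j) \<noteq> 0" using A'ij by auto
    then show "i = j + 1 \<or> i = k \<and> j = n - 1"
      using shA[OF ij(1,2)] Eij[OF ij(1,2)] by (auto split: if_splits)
  qed
  have cyceq: "cyc n k (A + E) = cyc n k A"
  proof (cases "entry A y n = 0")
    case True
    then have "A $$ (k, n-1) = 0" unfolding entry_def k_def by simp
    moreover have "E $$ (k, n-1) = 0" using Eij[of k "n-1"] kn by simp
    ultimately show ?thesis unfolding cyc_def using A'ij[of k "n-1"] kn by simp
  next
    case False
    then have Sy: "S \<subseteq> {1..<y}" using assms(4) unfolding stem_edges_def by simp
    have "E $$ (k, n-1) = 0" using Eij[of k "n-1"] kn by simp
    then have 1: "(A + E) $$ (k, n-1) = A $$ (k, n-1)" using A'ij[of k "n-1"] kn by simp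
    have 2: "(\<Prod>j\<in>{k..<n-1}. (A + E) $$ (j+1, j)) = (\<Prod>j\<in>{k..<n-1}. A $$ (j+1, j))"
    proof (rule prod.cong[OF refl])
      fix j assume j: "j \<in> {k..<n-1}"
      then have "j + 1 \<notin> S" using Sy ky by auto
      then show "(A + E) $$ (j+1, j) = A $$ (j+1, j)" using A'ij[of "j+1" j] Eij[of "j+1" j] j by auto
    qed
    show ?thesis unfolding cyc_def 1 2 ..
  qed
  have Pnn: "cyc n k A \<ge> 0"
  proof -
    have nn: "A $$ (i,j) \<ge> 0" if "i < n" "j < n" for i j using assms(2) A that unfolding nonneg_mat_def by auto
    show ?thesis unfolding cyc_def using kn
      by (intro mult_nonneg_nonneg prod_nonneg) (auto intro!: nn)
  qed
  have "spectral_radius (map_mat complex_of_real (A + E)) < 1"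
  proof (rule rho_bound[OF sh1 sh2 _ cyc_of_real[OF A kn] Pnn])
    show "cyc n k (map_mat complex_of_real (A + E)) = cyc n k (map_mat complex_of_real A)"
      using cyc_of_real[OF A kn] cyc_of_real[OF A' kn] cyceq by simp
    show "spectral_radius (map_mat complex_of_real A) < 1" using assms(3) unfolding rho_def .
  qed
  then show ?thesis unfolding rho_def E_def .
qed

end
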